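(* Let $S\subset\mathbb{R}^3$ be a $C^3$ surface and let $\Gamma$ be a closed asymptotic curve of $S$ contained in the region $\{K<0\}$. Let $(x,t)\in[0,x_0)\times[0,t_0)$ be a semi-global coordinate system near $\Gamma$ (periodic in $x$ with period $x_0$) such that $\{t=0\}$ is $\Gamma$ and each curve $\{t=\mathrm{const}\}$ is a closed curve homotopic to $\Gamma$, and write the second fundamental form as $II=L\,dx^2+2M\,dx\,dt+N\,dt^2$ (so $L(x,0)=0$ and $M(x,0)\neq0$). Then $$\int_{0}^{x_{0}}M^{-1}\,\partial_{t}L(x,0)\,dx=\pm\int_{\Gamma}k_{g}k_{n}|K|^{-1/2}\,ds,$$ where the sign is fixed (determined by the sign of $M$ along $\Gamma$).
   Context: $K$ is Gaussian curvature. An asymptotic curve is a curve whose tangent direction has zero normal curvature at every point. $k_g$ is the geodesic curvature of $\Gamma$, $k_n$ is the normal curvature of $S$ in the direction tangent to $S$ and perpendicular to $\Gamma$, and $ds$ is arclength along $\Gamma$. *)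

theory Defs
  imports "HOL-Analysis.Analysis"
begin

(* Coordinate domain of a semi-global coordinate system (x,t): x in R (periodic), 0 <= t < t0 *)
definition strip :: "real \<Rightarrow> (real \<times> real) set" where
  "strip t0 = UNIV \<times> {0..<t0}"

(* partial derivatives relative to a domain D (one-sided where D has a boundary) *)
definition pdx :: "(real \<times> real) set \<Rightarrow> (real \<times> real \<Rightarrow> 'a::real_normed_vector) \<Rightarrow> real \<times> real \<Rightarrow> 'a" where
  "pdx D f p = vector_derivative (\<lambda>s. f (s, snd p)) (at (fst p) within {s. (s, snd p) \<in> D})"

definition pdt :: "(real \<times> real) set \<Rightarrow> (real \<times> real \<Rightarrow> 'a::real_normed_vector) \<Rightarrow> real \<times> real \<Rightarrow> 'a" where
  "pdt D f p = vector_derivative (\<lambda>s. f (fst p, s)) (at (snd p) within {s. (fst p, s) \<in> D})"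

fun Ck_on :: "nat \<Rightarrow> (real \<times> real) set \<Rightarrow> (real \<times> real \<Rightarrow> 'a::real_normed_vector) \<Rightarrow> bool" where
  "Ck_on 0 D f = continuous_on D f"
| "Ck_on (Suc k) D f =
     (continuous_on D f \<and>
      (\<forall>p\<in>D. ((\<lambda>s. f (s, snd p)) has_vector_derivative pdx D f p) (at (fst p) within {s. (s, snd p) \<in> D})
            \<and> ((\<lambda>s. f (fst p, s)) has_vector_derivative pdt D f p) (at (snd p) within {s. (fst p, s) \<in> D}))
      \<and> Ck_on k D (pdx D f) \<and> Ck_on k D (pdt D f))"

definition unit_normal :: "(real \<times> real) set \<Rightarrow> (real \<times> real \<Rightarrow> real^3) \<Rightarrow> real \<times> real \<Rightarrow> real^3" where
  "unit_normal D X p = (1 / norm (cross3 (pdx D X p) (pdt D X p))) *\<^sub>R cross3 (pdx D X p) (pdt D X p)"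

definition fff_E where "fff_E D X p = pdx D X p \<bullet> pdx D X p"
definition fff_F where "fff_F D X p = pdx D X p \<bullet> pdt D X p"
definition fff_G where "fff_G D X p = pdt D X p \<bullet> pdt D X p"

definition sff_L :: "(real \<times> real) set \<Rightarrow> (real \<times> real \<Rightarrow> real^3) \<Rightarrow> real \<times> real \<Rightarrow> real" where
  "sff_L D X p = pdx D (pdx D X) p \<bullet> unit_normal D X p"
definition sff_M :: "(real \<times> real) set \<Rightarrow> (real \<times> real \<Rightarrow> real^3) \<Rightarrow> real \<times> real \<Rightarrow> real" where
  "sff_M D X p = pdt D (pdx D X) p \<bullet> unit_normal D X p"
definition sff_N :: "(real \<times> real) set \<Rightarrow> (real \<times> real \<Rightarrow> real^3) \<Rightarrow> real \<times> real \<Rightarrow> real" where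
  "sff_N D X p = pdt D (pdt D X) p \<bullet> unit_normal D X p"

(* II evaluated on the tangent vector a X_x + b X_t *)
definition sff_form :: "(real \<times> real) set \<Rightarrow> (real \<times> real \<Rightarrow> real^3) \<Rightarrow> real \<times> real \<Rightarrow> real \<Rightarrow> real \<Rightarrow> real" where
  "sff_form D X p a b = sff_L D X p * a\<^sup>2 + 2 * sff_M D X p * a * b + sff_N D X p * b\<^sup>2"

definition normal_curv :: "(real \<times> real) set \<Rightarrow> (real \<times> real \<Rightarrow> real^3) \<Rightarrow> real \<times> real \<Rightarrow> real \<Rightarrow> real \<Rightarrow> real" where
  "normal_curv D X p a b = sff_form D X p a b / (norm (a *\<^sub>R pdx D X p + b *\<^sub>R pdt D X p))\<^sup>2"

definition gauss_curv :: "(real \<times> real) set \<Rightarrow> (real \<times> real \<Rightarrow> real^3) \<Rightarrow> real \<times> real \<Rightarrow> real" where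
  "gauss_curv D X p = (sff_L D X p * sff_N D X p - (sff_M D X p)\<^sup>2) /
                      (fff_E D X p * fff_G D X p - (fff_F D X p)\<^sup>2)"

(* normal curvature k_n in the tangent direction perpendicular to the x-curve through p:
   that direction is X_t - (F/E) X_x *)
definition normal_curv_perp :: "(real \<times> real) set \<Rightarrow> (real \<times> real \<Rightarrow> real^3) \<Rightarrow> real \<times> real \<Rightarrow> real" where
  "normal_curv_perp D X p = normal_curv D X p (- fff_F D X p / fff_E D X p) 1"

(* signed geodesic curvature of the x-curve s \<mapsto> X(s,t) (oriented by increasing x, w.r.t. the normal n):
   k_g = gamma'' . (n \<times> gamma') / |gamma'|^3 *)
definition geod_curv_x :: "(real \<times> real) set \<Rightarrow> (real \<times> real \<Rightarrow> real^3) \<Rightarrow> real \<times> real \<Rightarrow> real" where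
  "geod_curv_x D X p = (pdx D (pdx D X) p \<bullet> cross3 (unit_normal D X p) (pdx D X p)) / (norm (pdx D X p)) ^ 3"

end

theory Submission
  imports Defs
begin


lemma bb_cross: "bounded_bilinear (cross3 :: real^3 \<Rightarrow> real^3 \<Rightarrow> real^3)"
  using bilinear_cross bilinear_conv_bounded_bilinear by blast

lemma vd_cross:
  fixes a b :: "real \<Rightarrow> real^3"
  assumes "(a has_vector_derivative a') (at s within S)" "(b has_vector_derivative b') (at s within S)"
  shows "((\<lambda>r. cross3 (a r) (b r)) has_vector_derivative (cross3 (a s) b' + cross3 a' (b s))) (at s within S)"
  using bounded_bilinear.has_vector_derivative[OF bb_cross assms] .

lemma vd_inner:
  fixes a b :: "real \<Rightarrow> real^3"
  assumes "(a has_vector_derivative a') (at s within S)" "(b has_vector_derivative b') (at s within S)"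
  shows "((\<lambda>r. a r \<bullet> b r) has_vector_derivative (a s \<bullet> b' + a' \<bullet> b s)) (at s within S)"
  using bounded_bilinear.has_vector_derivative[OF bounded_bilinear_inner assms] .


lemma vd_norm:
  fixes c :: "real \<Rightarrow> real^3"
  assumes c: "(c has_vector_derivative c') (at s within S)" and nz: "c s \<noteq> 0"
  shows "((\<lambda>r. norm (c r)) has_field_derivative ((c s \<bullet> c') / norm (c s))) (at s within S)"
proof -
  have "((\<lambda>r. norm (c r)) has_derivative (\<lambda>h. sgn (c s) \<bullet> (h *\<^sub>R c'))) (at s within S)"
    using has_derivative_compose[OF c[unfolded has_vector_derivative_def] has_derivative_norm[OF nz]]
    by (simp add: o_def inner_commute)
  moreover have "(\<lambda>h. sgn (c s) \<bullet> (h *\<^sub>R c')) = (*) ((c s \<bullet> c') / norm (c s))"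
    by (auto simp: sgn_div_norm inner_commute divide_inverse fun_eq_iff)
  ultimately show ?thesis
    unfolding has_field_derivative_def by simp
qed


lemma vd_unit:
  fixes c :: "real \<Rightarrow> real^3"
  assumes c: "(c has_vector_derivative c') (at s within S)" and nz: "c s \<noteq> 0"
  shows "((\<lambda>r. (1 / norm (c r)) *\<^sub>R c r) has_vector_derivative
     ((1 / norm (c s)) *\<^sub>R c' - ((c s \<bullet> c') / norm (c s) ^ 3) *\<^sub>R c s)) (at s within S)"
proof -
  have n0: "norm (c s) \<noteq> 0" using nz by simp
  have d1: "((\<lambda>r. inverse (norm (c r))) has_field_derivative (- (((c s \<bullet> c') / norm (c s)) * inverse (norm (c s) ^ Suc (Suc 0))))) (at s within S)"
    by (rule DERIV_inverse_fun[OF vd_norm[OF c nz] n0])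
  note d2 = has_vector_derivative_scaleR[OF d1 c]
  have e1: "(\<lambda>r. (1 / norm (c r)) *\<^sub>R c r) = (\<lambda>r. inverse (norm (c r)) *\<^sub>R c r)"
    by (simp add: inverse_eq_divide)
  have e2: "- ((k / n) * inverse (n ^ Suc (Suc 0))) = - (k / n ^ 3)" for n k :: real
    by (simp add: power3_eq_cube inverse_eq_divide)
  have e3: "inverse (norm (c s)) *\<^sub>R c' + (- (((c s \<bullet> c') / norm (c s)) * inverse (norm (c s) ^ Suc (Suc 0)))) *\<^sub>R c s
     = (1 / norm (c s)) *\<^sub>R c' - ((c s \<bullet> c') / norm (c s) ^ 3) *\<^sub>R c s"
    unfolding e2 by (simp add: inverse_eq_divide)
  show ?thesis using d2 unfolding e1 e3 .
qed


lemma strip_x: "0 \<le> t \<Longrightarrow> t < t0 \<Longrightarrow> {s. (s, t) \<in> strip t0} = UNIV"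
  by (auto simp: strip_def)

lemma strip_t: "{s. (x, s) \<in> strip t0} = {0..<t0}"
  by (auto simp: strip_def)

lemma Ck_mono: "Ck_on (Suc k) D f \<Longrightarrow> Ck_on k D f"
proof (induction k arbitrary: f)
  case 0 then show ?case by simp
next
  case (Suc k)
  have a: "continuous_on D f"
     "\<forall>p\<in>D. ((\<lambda>s. f (s, snd p)) has_vector_derivative pdx D f p) (at (fst p) within {s. (s, snd p) \<in> D})
            \<and> ((\<lambda>s. f (fst p, s)) has_vector_derivative pdt D f p) (at (snd p) within {s. (fst p, s) \<in> D})"
     "Ck_on (Suc k) D (pdx D f)" "Ck_on (Suc k) D (pdt D f)"
    using Suc.prems unfolding Ck_on.simps(2)[of "Suc k"] by blast+
  show ?case unfolding Ck_on.simps(2)[of k]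
    by (intro conjI a(1) a(2) Suc.IH a(3) a(4))
qed

lemma Ck_derivs:
  assumes "Ck_on (Suc k) (strip t0) f" "0 \<le> t" "t < t0"
  shows "((\<lambda>s. f (s, t)) has_vector_derivative pdx (strip t0) f (x, t)) (at x)"
    and "((\<lambda>s. f (x, s)) has_vector_derivative pdt (strip t0) f (x, t)) (at t within {0..<t0})"
proof -
  have p: "(x, t) \<in> strip t0" using assms by (simp add: strip_def)
  from assms(1) have "\<forall>p\<in>strip t0. ((\<lambda>s. f (s, snd p)) has_vector_derivative pdx (strip t0) f p) (at (fst p) within {s. (s, snd p) \<in> strip t0})
            \<and> ((\<lambda>s. f (fst p, s)) has_vector_derivative pdt (strip t0) f p) (at (snd p) within {s. (fst p, s) \<in> strip t0})"
    unfolding Ck_on.simps(2)[of k] by blast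
  from bspec[OF this p] show "((\<lambda>s. f (s, t)) has_vector_derivative pdx (strip t0) f (x, t)) (at x)"
      "((\<lambda>s. f (x, s)) has_vector_derivative pdt (strip t0) f (x, t)) (at t within {0..<t0})"
    using strip_x[OF assms(2,3)] strip_t[of x t0] by simp_all
qed

lemma Ck_cont: "Ck_on k D f \<Longrightarrow> continuous_on D f"
  by (cases k) auto

lemma cont_slice_t:
  assumes "continuous_on (strip t0) g" "S \<subseteq> {0..<t0}"
  shows "continuous_on S (\<lambda>s. g (y, s))"
proof -
  have "continuous_on S (\<lambda>s. (y, s))" by (intro continuous_intros)
  moreover have "(\<lambda>s. (y, s)) ` S \<subseteq> strip t0" using assms(2) by (auto simp: strip_def)
  ultimately show ?thesis using continuous_on_compose2[OF assms(1)] by blast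
qed


lemma schwarz0:
  fixes f :: "real \<times> real \<Rightarrow> real^3"
  assumes C2: "Ck_on 2 (strip t0) f" and t0: "t0 > 0"
  shows "pdt (strip t0) (pdx (strip t0) f) (x, 0) = pdx (strip t0) (pdt (strip t0) f) (x, 0)"
proof -
  define D where "D = strip t0"
  define u where "u = pdx D f"
  define v where "v = pdt D f"
  define w where "w = pdx D v"
  have C2': "Ck_on (Suc (Suc 0)) D f" using C2 by (simp add: D_def numeral_2_eq_2)
  have Cu: "Ck_on (Suc 0) D u" and Cv: "Ck_on (Suc 0) D v" and cf: "continuous_on D f"
    using C2' unfolding Ck_on.simps(2)[of "Suc 0"] u_def v_def by blast+
  have cw: "continuous_on D w" using Cv unfolding Ck_on.simps(2)[of 0] w_def by simp
  have cv: "continuous_on D v" using Cv unfolding Ck_on.simps(2)[of 0] by simp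
  have dv: "((\<lambda>y. v (y, s)) has_vector_derivative w (y, s)) (at y)" if "0 \<le> s" "s < t0" for y s
    using Ck_derivs(1)[OF Cv[unfolded D_def] that] unfolding w_def D_def .
  have df: "((\<lambda>r. f (y, r)) has_vector_derivative v (y, s)) (at s within {0..<t0})" if "0 \<le> s" "s < t0" for y s
    using Ck_derivs(2)[OF C2'[unfolded D_def] that] unfolding v_def D_def .
  have du: "((\<lambda>y. f (y, s)) has_vector_derivative u (y, s)) (at y)" if "0 \<le> s" "s < t0" for y s
    using Ck_derivs(1)[OF C2'[unfolded D_def] that] unfolding u_def D_def .
  have A: "f (y, t) = f (y, 0) + integral {0..t} (\<lambda>s. v (y, s))" if "0 \<le> t" "t < t0" for y t
  proof -
    have "((\<lambda>s. v (y, s)) has_integral (f (y, t) - f (y, 0))) {0..t}"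
    proof (rule fundamental_theorem_of_calculus[where f="\<lambda>s. f (y, s)"])
      show "0 \<le> t" by fact
      fix s assume s: "s \<in> {0..t}"
      then have s1: "0 \<le> s" "s < t0" using that by auto
      have sub: "{0..t} \<subseteq> {0..<t0}" using that by auto
      show "((\<lambda>s. f (y, s)) has_vector_derivative v (y, s)) (at s within {0..t})"
        by (rule has_vector_derivative_within_subset[OF df[OF s1] sub])
    qed
    then show ?thesis by (simp add: integral_unique)
  qed
  have B: "u (x, t) = u (x, 0) + integral {0..t} (\<lambda>s. w (x, s))" if "0 \<le> t" "t < t0" for t
  proof -
    have sub: "UNIV \<times> {0..t} \<subseteq> D" using that by (auto simp: D_def strip_def)
    have L: "((\<lambda>y. integral (cbox 0 t) (\<lambda>s. v (y, s))) has_vector_derivative integral (cbox 0 t) (\<lambda>s. w (x, s))) (at x within UNIV)"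
    proof (rule leibniz_rule_vector_derivative[where f="\<lambda>y s. v (y, s)" and fx="\<lambda>y s. w (y, s)"])
      fix y s assume "s \<in> cbox 0 t"
      then have "0 \<le> s" "s < t0" using that by auto
      then show "((\<lambda>y. v (y, s)) has_vector_derivative w (y, s)) (at y within UNIV)" using dv by simp
    next
      fix y
      have sub2: "{0..t} \<subseteq> {0..<t0}" using that by auto
      have "continuous_on {0..t} (\<lambda>s. v (y, s))"
        by (rule cont_slice_t[OF cv[unfolded D_def] sub2])
      then show "(\<lambda>s. v (y, s)) integrable_on cbox 0 t"
        by (simp add: integrable_continuous_real)
    next
      show "continuous_on (UNIV \<times> cbox 0 t) (\<lambda>(y, s). w (y, s))"
        using continuous_on_subset[OF cw sub] by simp
    qed (simp_all add: convex_UNIV)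
    have L2: "((\<lambda>y. f (y, 0) + integral {0..t} (\<lambda>s. v (y, s))) has_vector_derivative (u (x, 0) + integral {0..t} (\<lambda>s. w (x, s)))) (at x)"
      using has_vector_derivative_add[OF du[OF order.refl t0, of x] L] by (simp add: cbox_interval)
    have "(\<lambda>y. f (y, 0) + integral {0..t} (\<lambda>s. v (y, s))) = (\<lambda>y. f (y, t))"
      using A[OF that] by simp
    with L2 have "((\<lambda>y. f (y, t)) has_vector_derivative (u (x, 0) + integral {0..t} (\<lambda>s. w (x, s)))) (at x)"
      by simp
    from vector_derivative_unique_at[OF du[OF that, of x] this] show ?thesis .
  qed
  define b where "b = t0 / 2"
  have b: "0 < b" "b < t0" using t0 by (auto simp: b_def)
  have sub3: "{0..b} \<subseteq> {0..<t0}" using b by auto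
  have cwx: "continuous_on {0..b} (\<lambda>s. w (x, s))"
    by (rule cont_slice_t[OF cw[unfolded D_def] sub3])
  have I: "((\<lambda>t. integral {0..t} (\<lambda>s. w (x, s))) has_vector_derivative w (x, 0)) (at 0 within {0..b})"
    using integral_has_vector_derivative[OF cwx, of 0] b by simp
  have I2: "((\<lambda>t. u (x, 0) + integral {0..t} (\<lambda>s. w (x, s))) has_vector_derivative w (x, 0)) (at 0 within {0..b})"
    using has_vector_derivative_add[OF has_vector_derivative_const I] by simp
  have I3: "((\<lambda>t. u (x, t)) has_vector_derivative w (x, 0)) (at 0 within {0..b})"
  proof (rule has_vector_derivative_transform[OF _ _ I2])
    show "0 \<in> {0..b}" using b by simp
    fix t assume "t \<in> {0..b}"
    then have "0 \<le> t" "t < t0" using b by auto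
    then show "u (x, t) = u (x, 0) + integral {0..t} (\<lambda>s. w (x, s))" by (rule B)
  qed
  have E: "((\<lambda>t. u (x, t)) has_vector_derivative pdt D u (x, 0)) (at 0 within {0..b})"
    using has_vector_derivative_within_subset[OF Ck_derivs(2)[OF Cu[unfolded D_def], of 0 x] sub3] t0
    unfolding D_def by simp
  have nb: "at (0::real) within {0..b} \<noteq> bot"
    using at_within_Icc_at_right[OF b(1)] by simp
  have "pdt D u (x, 0) = w (x, 0)"
    using vector_derivative_unique_within[OF nb E I3] .
  then show ?thesis unfolding u_def w_def v_def D_def .
qed



lemma cramer3:
  fixes e f P c :: "real^3"
  shows "((cross3 e f) \<bullet> c) *\<^sub>R P = ((cross3 P f) \<bullet> c) *\<^sub>R e + ((cross3 e P) \<bullet> c) *\<^sub>R f + ((cross3 e f) \<bullet> P) *\<^sub>R c"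
  by (simp add: cross3_simps forall_3)

lemma trip1:
  fixes e f P Q T :: "real^3"
  shows "P \<bullet> (cross3 e T + cross3 Q f) - Q \<bullet> (cross3 e Q + cross3 P f) = P \<bullet> cross3 e T + 2 * (P \<bullet> cross3 Q f)"
  by (simp add: cross3_simps)

lemma trip2:
  fixes e f Q :: "real^3"
  shows "e \<bullet> cross3 Q f = - (Q \<bullet> cross3 e f)" "f \<bullet> cross3 e Q = - (Q \<bullet> cross3 e f)"
    "f \<bullet> cross3 e f = 0" "e \<bullet> cross3 e Q = 0" "f \<bullet> cross3 (cross3 e f) e = cross3 e f \<bullet> cross3 e f"
  by (simp_all add: cross3_simps)


lemma real_id:
  fixes w E ne q s X Y rn cc a b F tt :: real
  assumes w: "w > 0" and E: "E > 0" and ne: "ne > 0" and q: "q \<noteq> 0" and s: "s = sgn q"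
    and X: "X = Y - b * tt - 2 * a * q"
  shows "(X / w + rn) / (q / w) = (s * (Y / w - cc * q / w ^ 3 + rn)) / (s * (q / w)) + (cc / w) / w
      - ((a * E + b * F) + (a * E + b * F)) / E
      + (- s) * ((b * w) / (E * ne) * ((2 * (q / w) * (- F / E) + tt / w) / (w ^ 2 / E)) * (w / \<bar>q / w\<bar>) * ne)"
proof (cases "q > 0")
  case True
  then have s1: "s = 1" and aq: "\<bar>q / w\<bar> = q / w" using s w by auto
  show ?thesis unfolding s1 aq X using w E ne q
    by (simp add: field_simps power2_eq_square power3_eq_cube)
next
  case False
  then have s1: "s = -1" and aq: "\<bar>q / w\<bar> = - (q / w)" using s w q by auto
  show ?thesis unfolding s1 aq X using w E ne q
    by (simp add: field_simps power2_eq_square power3_eq_cube)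
qed


lemma key_alg:
  fixes e f P Q R T c n nt nx ct cx :: "real^3" and w s :: real
  assumes c: "c = cross3 e f" and w: "w = norm c" and n: "n = (1 / w) *\<^sub>R c"
    and ct: "ct = cross3 e T + cross3 Q f" and cx: "cx = cross3 e Q + cross3 P f"
    and nt: "nt = (1 / w) *\<^sub>R ct - ((c \<bullet> ct) / w ^ 3) *\<^sub>R c"
    and nx: "nx = (1 / w) *\<^sub>R cx - ((c \<bullet> cx) / w ^ 3) *\<^sub>R c"
    and c0: "c \<noteq> 0" and L0: "P \<bullet> n = 0" and M0: "Q \<bullet> n \<noteq> 0" and s: "s = sgn (Q \<bullet> n)"
  shows "(P \<bullet> nt + R \<bullet> n) / (Q \<bullet> n) = (s * (Q \<bullet> nx + R \<bullet> n)) / (s * (Q \<bullet> n)) + ((c \<bullet> cx) / w) / w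
      - (e \<bullet> P + P \<bullet> e) / (e \<bullet> e)
      + (- s) * (((P \<bullet> cross3 n e) / norm e ^ 3)
          * (((P \<bullet> n) * (- (e \<bullet> f) / (e \<bullet> e))\<^sup>2 + 2 * (Q \<bullet> n) * (- (e \<bullet> f) / (e \<bullet> e)) * 1 + (T \<bullet> n) * 1\<^sup>2)
              / (norm ((- (e \<bullet> f) / (e \<bullet> e)) *\<^sub>R e + 1 *\<^sub>R f))\<^sup>2)
          * \<bar>((P \<bullet> n) * (T \<bullet> n) - (Q \<bullet> n)\<^sup>2) / ((e \<bullet> e) * (f \<bullet> f) - (e \<bullet> f)\<^sup>2)\<bar> powr (-1/2)
          * norm e)"
proof -
  define q where "q = Q \<bullet> c"
  define tt where "tt = T \<bullet> c"
  define E where "E = e \<bullet> e"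
  define F where "F = e \<bullet> f"
  define G where "G = f \<bullet> f"
  have wpos: "w > 0" using c0 w by simp
  have ww: "w ^ 2 = c \<bullet> c" using w by (simp add: power2_norm_eq_inner)
  have cc0: "c \<bullet> c \<noteq> 0" using c0 by simp
  have Pc: "P \<bullet> c = 0" using L0 wpos unfolding n by simp
  have Mq: "Q \<bullet> n = q / w" unfolding n q_def by simp
  have Nt: "T \<bullet> n = tt / w" unfolding n tt_def by simp
  have q0: "q \<noteq> 0" using M0 Mq by auto
  have e0: "e \<noteq> 0" using c0 c by auto
  have Epos: "E > 0" using e0 by (simp add: E_def)
  have nepos: "norm e > 0" using e0 by simp
  have neE: "norm e ^ 2 = E" by (simp add: E_def power2_norm_eq_inner)
  have ne3: "norm e ^ 3 = E * norm e" using neE by (simp add: power3_eq_cube power2_eq_square)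
  have lag: "w ^ 2 = E * G - F ^ 2"
    using norm_cross_dot[of e f] unfolding w c E_def F_def G_def
    by (simp add: power_mult_distrib power2_norm_eq_inner)
  define a where "a = (cross3 P f \<bullet> c) / (c \<bullet> c)"
  define b where "b = (cross3 e P \<bullet> c) / (c \<bullet> c)"
  have Pdec: "P = a *\<^sub>R e + b *\<^sub>R f"
  proof -
    have "(c \<bullet> c) *\<^sub>R P = (cross3 P f \<bullet> c) *\<^sub>R e + (cross3 e P \<bullet> c) *\<^sub>R f"
    proof -
      have "(c \<bullet> c) *\<^sub>R P = (cross3 P f \<bullet> c) *\<^sub>R e + (cross3 e P \<bullet> c) *\<^sub>R f + (c \<bullet> P) *\<^sub>R c"
        using cramer3[where e=e and f=f and P=P and c=c] unfolding c[symmetric] .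
      moreover have "c \<bullet> P = 0" using Pc by (simp add: inner_commute)
      ultimately show ?thesis by simp
    qed
    then have "P = (1 / (c \<bullet> c)) *\<^sub>R ((cross3 P f \<bullet> c) *\<^sub>R e + (cross3 e P \<bullet> c) *\<^sub>R f)"
    proof -
      have "P = (1 / (c \<bullet> c)) *\<^sub>R ((c \<bullet> c) *\<^sub>R P)" using cc0 by simp
      then show ?thesis using \<open>(c \<bullet> c) *\<^sub>R P = _\<close> by simp
    qed
    then show ?thesis unfolding a_def b_def by (simp add: scaleR_add_right)
  qed
  have key1: "P \<bullet> ct = Q \<bullet> cx - b * tt - 2 * a * q"
  proof -
    have "P \<bullet> ct - Q \<bullet> cx = P \<bullet> cross3 e T + 2 * (P \<bullet> cross3 Q f)"
      unfolding ct cx by (rule trip1)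
    also have "\<dots> = - b * tt - 2 * a * q"
      unfolding tt_def q_def c
      by (subst (1 2) Pdec) (simp add: inner_add_left dot_cross_self trip2(1)[where e=e and Q=Q and f=f] trip2(2)[where f=f and e=e and Q=T] algebra_simps)
    finally show ?thesis by simp
  qed
  have eP: "e \<bullet> P = a * E + b * F" unfolding E_def F_def
    by (subst Pdec) (simp add: inner_add_right)
  have Pe: "P \<bullet> e = a * E + b * F" using eP by (simp add: inner_commute)
  have Pne: "P \<bullet> cross3 n e = b * w"
  proof -
    have "P \<bullet> cross3 n e = (1 / w) * (P \<bullet> cross3 c e)"
      unfolding n by (simp add: cross_mult_left)
    also have "P \<bullet> cross3 c e = b * (c \<bullet> c)"
      unfolding c by (subst Pdec) (simp add: inner_add_left trip2(5) dot_cross_self)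
    finally show ?thesis using wpos by (simp add: ww[symmetric] power2_eq_square)
  qed
  have nrm: "(norm ((- F / E) *\<^sub>R e + 1 *\<^sub>R f))\<^sup>2 = w ^ 2 / E"
  proof -
    have "(norm ((- F / E) *\<^sub>R e + 1 *\<^sub>R f))\<^sup>2 = (F / E)^2 * E - 2 * (F / E) * F + G"
      unfolding power2_norm_eq_inner E_def F_def G_def
      by (simp add: inner_add_left inner_add_right inner_commute power2_eq_square algebra_simps)
    also have "\<dots> = w ^ 2 / E" unfolding lag using Epos
      by (simp add: field_simps power2_eq_square)
    finally show ?thesis .
  qed
  have Kp: "\<bar>((P \<bullet> n) * (T \<bullet> n) - (Q \<bullet> n)\<^sup>2) / (E * G - F\<^sup>2)\<bar> powr (-1/2) = w / \<bar>q / w\<bar>"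
  proof -
    have "\<bar>((P \<bullet> n) * (T \<bullet> n) - (Q \<bullet> n)\<^sup>2) / (E * G - F\<^sup>2)\<bar> = (q / w / w)\<^sup>2"
      unfolding L0 Mq lag[symmetric] using wpos by (simp add: power2_eq_square field_simps)
    moreover have "((q / w / w)\<^sup>2) powr (-1/2) = w / \<bar>q / w\<bar>"
    proof -
      have pos: "(q / w / w)\<^sup>2 > 0" using q0 wpos by simp
      have "((q / w / w)\<^sup>2) powr (-1/2) = ((q / w / w)\<^sup>2) powr (-(1/2))" by simp
      also have "\<dots> = inverse (((q / w / w)\<^sup>2) powr (1/2))"
        by (rule powr_minus)
      also have "\<dots> = inverse (sqrt ((q / w / w)\<^sup>2))"
        using pos by (simp add: powr_half_sqrt)
      also have "\<dots> = inverse \<bar>q / w / w\<bar>" by (simp only: real_sqrt_abs)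
      also have "\<dots> = w / \<bar>q / w\<bar>" using wpos by (simp add: field_simps)
      finally show ?thesis .
    qed
    ultimately show ?thesis by simp
  qed
  have Pnt: "P \<bullet> nt = (P \<bullet> ct) / w"
    unfolding nt using Pc by (simp add: inner_diff_right)
  have Qnx: "Q \<bullet> nx = (Q \<bullet> cx) / w - (c \<bullet> cx) * q / w ^ 3"
    unfolding nx q_def by (simp add: inner_diff_right inner_commute)
  have s': "s = sgn q" using s Mq wpos by (simp add: sgn_divide)
  show ?thesis
    unfolding E_def[symmetric] F_def[symmetric] G_def[symmetric] nrm Kp
    unfolding Pnt Qnx Mq Nt L0 Pne ne3 eP Pe
    using real_id[OF wpos Epos nepos q0 s' key1] by simp
qed



lemma nb0: "t0 > 0 \<Longrightarrow> at (0::real) within {0..<t0} \<noteq> bot"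
proof -
  assume t0: "t0 > 0"
  have "at (0::real) within {0..t0/2} \<le> at 0 within {0..<t0}"
    by (rule at_le) (use t0 in auto)
  moreover have "at (0::real) within {0..t0/2} \<noteq> bot"
    using at_within_Icc_at_right[of 0 "t0/2"] t0 by simp
  ultimately show ?thesis by (metis bot_unique)
qed

lemma ln_deriv:
  fixes h :: "real \<Rightarrow> real"
  assumes "0 < h x" "(h has_field_derivative d) (at x within S)"
  shows "((\<lambda>y. ln (h y)) has_field_derivative d / h x) (at x within S)"
  using DERIV_chain2[OF DERIV_ln_divide[OF assms(1)] assms(2)] by simp

lemma per_deriv:
  fixes h :: "real \<Rightarrow> real^3"
  assumes per: "\<And>y. h (y + x0) = h y" and d: "(h has_vector_derivative d) (at 0)"
  shows "(h has_vector_derivative d) (at x0)"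
proof -
  have eq: "h = h \<circ> (\<lambda>y. y - x0)"
    using per[of "_ - x0"] by (auto simp: fun_eq_iff)
  have "((\<lambda>y. y - x0) has_vector_derivative 1) (at x0)"
    by (rule derivative_eq_intros | simp)+
  from vector_diff_chain_at[OF this] d have "((h \<circ> (\<lambda>y. y - x0)) has_vector_derivative d) (at x0)"
    by simp
  then show ?thesis using eq by simp
qed

lemma t_eq:
  fixes h1 h2 :: "real \<Rightarrow> real^3"
  assumes t0: "t0 > 0" and eq: "\<And>s. 0 \<le> s \<Longrightarrow> s < t0 \<Longrightarrow> h1 s = h2 s"
    and d1: "(h1 has_vector_derivative d1) (at 0 within {0..<t0})"
    and d2: "(h2 has_vector_derivative d2) (at 0 within {0..<t0})"
  shows "d1 = d2"
proof -
  have "(h2 has_vector_derivative d1) (at 0 within {0..<t0})"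
    by (rule has_vector_derivative_transform[OF _ _ d1]) (use t0 eq in auto)
  from vector_derivative_unique_within[OF nb0[OF t0] this d2] show ?thesis .
qed



theorem mainTheorem6:
  fixes X :: "real \<times> real \<Rightarrow> real^3" and x0 t0 :: real
  assumes x0_pos: "x0 > 0" and t0_pos: "t0 > 0"
    and C3: "Ck_on 3 (strip t0) X"
    and periodic: "\<forall>x t. 0 \<le> t \<and> t < t0 \<longrightarrow> X (x + x0, t) = X (x, t)"
    and coord: "inj_on X ({0..<x0} \<times> {0..<t0})"
    and regular: "\<forall>p\<in>strip t0. cross3 (pdx (strip t0) X p) (pdt (strip t0) X p) \<noteq> 0"
    and asymptotic: "\<forall>x. normal_curv (strip t0) X (x, 0) 1 0 = 0"
    and neg_curv: "\<forall>x. gauss_curv (strip t0) X (x, 0) < 0"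
  shows "integral {0..x0} (\<lambda>x. pdt (strip t0) (sff_L (strip t0) X) (x, 0) / sff_M (strip t0) X (x, 0))
       = - sgn (sff_M (strip t0) X (0, 0)) *
         integral {0..x0} (\<lambda>x. geod_curv_x (strip t0) X (x, 0) * normal_curv_perp (strip t0) X (x, 0)
                               * \<bar>gauss_curv (strip t0) X (x, 0)\<bar> powr (-1/2) * norm (pdx (strip t0) X (x, 0)))"
proof -
  define D where "D = strip t0"
  define Xx where "Xx = pdx D X"
  define Xt where "Xt = pdt D X"
  define Xxx where "Xxx = pdx D Xx"
  define Xxt where "Xxt = pdt D Xx"
  define Xtx where "Xtx = pdx D Xt"
  define Xtt where "Xtt = pdt D Xt"
  define Xxxt where "Xxxt = pdt D Xxx"
  define Xxtx where "Xxtx = pdx D Xxt"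
  have C3': "Ck_on (Suc (Suc (Suc 0))) D X" using C3 by (simp add: D_def numeral_3_eq_3)
  have CXx: "Ck_on (Suc (Suc 0)) D Xx" and CXt: "Ck_on (Suc (Suc 0)) D Xt"
    using C3' unfolding Ck_on.simps(2)[of "Suc (Suc 0)"] Xx_def Xt_def by blast+
  have CXxx: "Ck_on (Suc 0) D Xxx" and CXxt: "Ck_on (Suc 0) D Xxt"
    using CXx unfolding Ck_on.simps(2)[of "Suc 0"] Xxx_def Xxt_def by blast+
  have C2X: "Ck_on 2 (strip t0) X" using Ck_mono[OF C3'] by (simp add: D_def numeral_2_eq_2)
  have C2Xx: "Ck_on 2 (strip t0) Xx" using CXx by (simp add: D_def numeral_2_eq_2)
  have sw2: "Xxt (x, 0) = Xtx (x, 0)" for x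
    using schwarz0[OF C2X t0_pos] unfolding Xxt_def Xtx_def Xx_def Xt_def D_def .
  have sw3: "Xxxt (x, 0) = Xxtx (x, 0)" for x
    using schwarz0[OF C2Xx t0_pos] unfolding Xxxt_def Xxtx_def Xxx_def Xxt_def D_def .
  note z = order.refl[of "0::real"] t0_pos
  have dXx_t: "((\<lambda>s. Xx (x, s)) has_vector_derivative Xxt (x, 0)) (at 0 within {0..<t0})" for x
    using Ck_derivs(2)[OF CXx[unfolded D_def] z] unfolding Xxt_def D_def .
  have dXt_t: "((\<lambda>s. Xt (x, s)) has_vector_derivative Xtt (x, 0)) (at 0 within {0..<t0})" for x
    using Ck_derivs(2)[OF CXt[unfolded D_def] z] unfolding Xtt_def D_def .
  have dXxx_t: "((\<lambda>s. Xxx (x, s)) has_vector_derivative Xxxt (x, 0)) (at 0 within {0..<t0})" for x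
    using Ck_derivs(2)[OF CXxx[unfolded D_def] z] unfolding Xxxt_def D_def .
  have dXx_x: "((\<lambda>y. Xx (y, 0)) has_vector_derivative Xxx (x, 0)) (at x)" for x
    using Ck_derivs(1)[OF CXx[unfolded D_def] z] unfolding Xxx_def D_def .
  have dXt_x: "((\<lambda>y. Xt (y, 0)) has_vector_derivative Xtx (x, 0)) (at x)" for x
    using Ck_derivs(1)[OF CXt[unfolded D_def] z] unfolding Xtx_def D_def .
  have dXxt_x: "((\<lambda>y. Xxt (y, 0)) has_vector_derivative Xxtx (x, 0)) (at x)" for x
    using Ck_derivs(1)[OF CXxt[unfolded D_def] z] unfolding Xxtx_def D_def .
  define e where "e = (\<lambda>y. Xx (y, 0))"
  define f where "f = (\<lambda>y. Xt (y, 0))"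
  define c where "c = (\<lambda>y. cross3 (e y) (f y))"
  define n where "n = (\<lambda>y. (1 / norm (c y)) *\<^sub>R c y)"
  define Mf where "Mf = (\<lambda>y. Xxt (y, 0) \<bullet> n y)"
  have un: "unit_normal D X p = (1 / norm (cross3 (Xx p) (Xt p))) *\<^sub>R cross3 (Xx p) (Xt p)" for p
    unfolding unit_normal_def Xx_def Xt_def ..
  have un0: "unit_normal D X (y, 0) = n y" for y
    unfolding un n_def c_def e_def f_def ..
  have sL: "sff_L D X p = Xxx p \<bullet> unit_normal D X p" for p
    unfolding sff_L_def Xxx_def Xx_def ..
  have sM: "sff_M D X p = Xxt p \<bullet> unit_normal D X p" for p
    unfolding sff_M_def Xxt_def Xx_def ..
  have sN: "sff_N D X p = Xtt p \<bullet> unit_normal D X p" for p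
    unfolding sff_N_def Xtt_def Xt_def ..
  have hM: "sff_M D X (y, 0) = Mf y" for y unfolding sM un0 Mf_def ..
  have c0: "c y \<noteq> 0" for y
  proof -
    have "(y, 0) \<in> strip t0" using t0_pos by (simp add: strip_def)
    then show ?thesis using regular unfolding c_def e_def f_def Xx_def Xt_def D_def by blast
  qed
  have e0: "e y \<noteq> 0" for y using c0[of y] unfolding c_def by auto
  have L0: "Xxx (y, 0) \<bullet> n y = 0" for y
  proof -
    have "normal_curv D X (y, 0) 1 0 = 0" using asymptotic unfolding D_def by blast
    then have "Xxx (y, 0) \<bullet> n y / (norm (e y))\<^sup>2 = 0"
      unfolding normal_curv_def sff_form_def sL un0 e_def Xx_def by simp
    then show ?thesis using e0[of y] by simp
  qed
  have M0: "Mf y \<noteq> 0" for y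
  proof
    assume "Mf y = 0"
    have "gauss_curv D X (y, 0) < 0" using neg_curv unfolding D_def by blast
    then show False unfolding gauss_curv_def sL sM un0 L0 hM[unfolded sM un0] \<open>Mf y = 0\<close>
      by simp
  qed
  define cx where "cx = (\<lambda>y. cross3 (e y) (Xtx (y, 0)) + cross3 (Xxx (y, 0)) (f y))"
  define nx where "nx = (\<lambda>y. (1 / norm (c y)) *\<^sub>R cx y - ((c y \<bullet> cx y) / norm (c y) ^ 3) *\<^sub>R c y)"
  define Mp where "Mp = (\<lambda>y. Xxt (y, 0) \<bullet> nx y + Xxtx (y, 0) \<bullet> n y)"
  have dc: "(c has_vector_derivative cx x) (at x)" for x
    using vd_cross[OF dXx_x dXt_x, of x] unfolding c_def cx_def e_def f_def by simp
  have dn: "(n has_vector_derivative nx x) (at x)" for x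
    using vd_unit[OF dc c0, of x] unfolding n_def nx_def by simp
  have dM: "(Mf has_real_derivative Mp x) (at x)" for x
    using vd_inner[OF dXxt_x dn, of x] unfolding Mf_def Mp_def has_real_derivative_iff_has_vector_derivative
    by simp
  have dw: "((\<lambda>y. norm (c y)) has_real_derivative (c x \<bullet> cx x) / norm (c x)) (at x)" for x
    using vd_norm[OF dc c0] .
  have dE: "((\<lambda>y. e y \<bullet> e y) has_real_derivative (e x \<bullet> Xxx (x, 0) + Xxx (x, 0) \<bullet> e x)) (at x)" for x
    using vd_inner[OF dXx_x dXx_x, of x] unfolding e_def has_real_derivative_iff_has_vector_derivative
    by simp
  have contM: "continuous_on A Mf" for A
    using dM by (meson DERIV_isCont continuous_at_imp_continuous_on)
  define s0 where "s0 = sgn (Mf 0)"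
  have pos: "s0 * Mf x > 0" if "0 \<le> x" for x
  proof (cases "Mf 0 > 0")
    case True
    have "Mf x > 0"
    proof (rule ccontr)
      assume "\<not> Mf x > 0"
      have "\<exists>z. 0 \<le> z \<and> z \<le> x \<and> Mf z = 0"
        by (rule IVT2') (use True that contM \<open>\<not> Mf x > 0\<close> in auto)
      then obtain z where "0 \<le> z" "z \<le> x" "Mf z = 0" by blast
      then show False using M0 by blast
    qed
    then show ?thesis using True by (simp add: s0_def)
  next
    case False
    then have neg: "Mf 0 < 0" using M0[of 0] by linarith
    have "Mf x < 0"
    proof (rule ccontr)
      assume "\<not> Mf x < 0"
      have "\<exists>z. 0 \<le> z \<and> z \<le> x \<and> Mf z = 0"
        by (rule IVT') (use neg that contM \<open>\<not> Mf x < 0\<close> in auto)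
      then obtain z where "0 \<le> z" "z \<le> x" "Mf z = 0" by blast
      then show False using M0 by blast
    qed
    then show ?thesis using neg by (simp add: s0_def mult_neg_neg)
  qed
  have s0sgn: "s0 = sgn (Mf x)" if "0 \<le> x" for x
    using pos[OF that] M0[of 0] by (cases "Mf 0 > 0") (auto simp: s0_def sgn_if split: if_splits)
  define g where "g = (\<lambda>y. ln (s0 * Mf y) + ln (norm (c y)) - ln (e y \<bullet> e y))"
  define G' where "G' = (\<lambda>y. (s0 * Mp y) / (s0 * Mf y) + ((c y \<bullet> cx y) / norm (c y)) / norm (c y)
      - (e y \<bullet> Xxx (y, 0) + Xxx (y, 0) \<bullet> e y) / (e y \<bullet> e y))"
  have dg: "(g has_real_derivative G' x) (at x)" if "0 \<le> x" for x
  proof -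
    have d1: "((\<lambda>y. ln (s0 * Mf y)) has_real_derivative (s0 * Mp x) / (s0 * Mf x)) (at x)"
      by (rule ln_deriv[OF pos[OF that] DERIV_cmult[OF dM]])
    have npos: "0 < norm (c x)" using c0[of x] by simp
    have d2: "((\<lambda>y. ln (norm (c y))) has_real_derivative ((c x \<bullet> cx x) / norm (c x)) / norm (c x)) (at x)"
      by (rule ln_deriv[OF npos dw])
    have epos: "0 < e x \<bullet> e x" using e0[of x] by simp
    have d3: "((\<lambda>y. ln (e y \<bullet> e y)) has_real_derivative (e x \<bullet> Xxx (x, 0) + Xxx (x, 0) \<bullet> e x) / (e x \<bullet> e x)) (at x)"
      by (rule ln_deriv[OF epos dE])
    show ?thesis unfolding g_def G'_def by (rule DERIV_diff[OF DERIV_add[OF d1 d2] d3])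
  qed
  have ftc: "(G' has_integral (g x0 - g 0)) {0..x0}"
  proof (rule fundamental_theorem_of_calculus)
    show "0 \<le> x0" using x0_pos by simp
    fix x assume "x \<in> {0..x0}"
    then have "0 \<le> x" by simp
    from dg[OF this] show "(g has_vector_derivative G' x) (at x within {0..x0})"
      unfolding has_real_derivative_iff_has_vector_derivative by (rule has_vector_derivative_at_within)
  qed
  have perX: "\<And>y. X (y + x0, s) = X (y, s)" if "0 \<le> s" "s < t0" for s
    using periodic that by blast
  have CX1: "Ck_on (Suc (Suc (Suc 0))) (strip t0) X" using C3' unfolding D_def .
  have perXx: "Xx (x0, s) = Xx (0, s)" if "0 \<le> s" "s < t0" for s
  proof -
    have "((\<lambda>y. X (y, s)) has_vector_derivative Xx (0, s)) (at x0)"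
      by (rule per_deriv[where h="\<lambda>y. X (y, s)", OF perX[OF that]]) (use Ck_derivs(1)[OF CX1 that, of 0] in \<open>simp add: Xx_def D_def\<close>)
    from vector_derivative_unique_at[OF Ck_derivs(1)[OF CX1 that, of x0] this]
    show ?thesis unfolding Xx_def D_def .
  qed
  have perXt: "Xt (x0, 0) = Xt (0, 0)"
    unfolding Xt_def D_def
    by (rule t_eq[OF t0_pos _ Ck_derivs(2)[OF CX1 z, of x0] Ck_derivs(2)[OF CX1 z, of 0]])
       (use perX in \<open>metis add_0\<close>)
  have perXxt: "Xxt (x0, 0) = Xxt (0, 0)"
    unfolding Xxt_def D_def
    by (rule t_eq[OF t0_pos _ Ck_derivs(2)[OF CXx[unfolded D_def] z, of x0] Ck_derivs(2)[OF CXx[unfolded D_def] z, of 0]])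
       (use perXx in auto)
  have gper: "g x0 = g 0"
    unfolding g_def Mf_def n_def c_def e_def f_def using perXx[OF z] perXt perXxt by simp
  define F1 where "F1 = (\<lambda>x. pdt D (sff_L D X) (x, 0) / sff_M D X (x, 0))"
  define F2 where "F2 = (\<lambda>x. geod_curv_x D X (x, 0) * normal_curv_perp D X (x, 0)
                               * \<bar>gauss_curv D X (x, 0)\<bar> powr (-1/2) * norm (pdx D X (x, 0)))"
  have pw: "F1 x = G' x + (- s0) * F2 x" if x0': "0 \<le> x" for x
  proof -
    define ct where "ct = cross3 (e x) (Xtt (x, 0)) + cross3 (Xxt (x, 0)) (f x)"
    define nt where "nt = (1 / norm (c x)) *\<^sub>R ct - ((c x \<bullet> ct) / norm (c x) ^ 3) *\<^sub>R c x"
    have dcs: "((\<lambda>s. cross3 (Xx (x, s)) (Xt (x, s))) has_vector_derivative ct) (at 0 within {0..<t0})"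
      using vd_cross[OF dXx_t dXt_t] unfolding ct_def e_def f_def .
    have nz: "cross3 (Xx (x, 0)) (Xt (x, 0)) \<noteq> 0" using c0[of x] unfolding c_def e_def f_def .
    have dL: "((\<lambda>s. sff_L D X (x, s)) has_vector_derivative (Xxx (x, 0) \<bullet> nt + Xxxt (x, 0) \<bullet> n x)) (at 0 within {0..<t0})"
      using vd_inner[OF dXxx_t vd_unit[OF dcs nz]] unfolding sL un nt_def n_def c_def e_def f_def .
    have pL: "pdt D (sff_L D X) (x, 0) = Xxx (x, 0) \<bullet> nt + Xxxt (x, 0) \<bullet> n x"
      unfolding pdt_def D_def strip_t fst_conv snd_conv
      by (rule vector_derivative_within[OF nb0[OF t0_pos] dL[unfolded D_def]])
    have cxe: "cx x = cross3 (e x) (Xxt (x, 0)) + cross3 (Xxx (x, 0)) (f x)"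
      unfolding cx_def sw2 ..
    note K = key_alg[where c="c x" and e="e x" and f="f x" and n="n x" and w="norm (c x)"
        and ct=ct and cx="cx x" and nt=nt and nx="nx x" and P="Xxx (x, 0)" and Q="Xxt (x, 0)"
        and R="Xxxt (x, 0)" and T="Xtt (x, 0)" and s=s0]
    have hc: "c x = cross3 (e x) (f x)" by (simp add: c_def)
    have hn: "n x = (1 / norm (c x)) *\<^sub>R c x" by (simp add: n_def)
    have hnx: "nx x = (1 / norm (c x)) *\<^sub>R cx x - ((c x \<bullet> cx x) / norm (c x) ^ 3) *\<^sub>R c x"
      by (simp add: nx_def)
    have M0': "Xxt (x, 0) \<bullet> n x \<noteq> 0" using M0[of x] unfolding Mf_def .
    have s0': "s0 = sgn (Xxt (x, 0) \<bullet> n x)" using s0sgn[OF x0'] unfolding Mf_def .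
    note K2 = K[OF hc refl hn ct_def cxe nt_def hnx c0[of x] L0[of x] M0' s0']
    have hF1: "F1 x = (Xxx (x, 0) \<bullet> nt + Xxxt (x, 0) \<bullet> n x) / (Xxt (x, 0) \<bullet> n x)"
      unfolding F1_def pL hM Mf_def ..
    have hG: "G' x = (s0 * (Xxt (x, 0) \<bullet> nx x + Xxxt (x, 0) \<bullet> n x)) / (s0 * (Xxt (x, 0) \<bullet> n x))
       + ((c x \<bullet> cx x) / norm (c x)) / norm (c x) - (e x \<bullet> Xxx (x, 0) + Xxx (x, 0) \<bullet> e x) / (e x \<bullet> e x)"
      unfolding G'_def Mp_def Mf_def sw3 ..
    have hF2: "F2 x = ((Xxx (x, 0) \<bullet> cross3 (n x) (e x)) / norm (e x) ^ 3)
          * (((Xxx (x, 0) \<bullet> n x) * (- (e x \<bullet> f x) / (e x \<bullet> e x))\<^sup>2 + 2 * (Xxt (x, 0) \<bullet> n x) * (- (e x \<bullet> f x) / (e x \<bullet> e x)) * 1 + (Xtt (x, 0) \<bullet> n x) * 1\<^sup>2)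
              / (norm ((- (e x \<bullet> f x) / (e x \<bullet> e x)) *\<^sub>R e x + 1 *\<^sub>R f x))\<^sup>2)
          * \<bar>((Xxx (x, 0) \<bullet> n x) * (Xtt (x, 0) \<bullet> n x) - (Xxt (x, 0) \<bullet> n x)\<^sup>2) / ((e x \<bullet> e x) * (f x \<bullet> f x) - (e x \<bullet> f x)\<^sup>2)\<bar> powr (-1/2)
          * norm (e x)"
      unfolding F2_def geod_curv_x_def normal_curv_perp_def normal_curv_def sff_form_def gauss_curv_def
        fff_E_def fff_F_def fff_G_def sL sM sN un0
      unfolding Xx_def[symmetric] Xt_def[symmetric]
      unfolding Xxx_def[symmetric]
      unfolding e_def f_def ..
    show ?thesis unfolding hF1 hG hF2 by (rule K2)
  qed
  have g0: "(G' has_integral 0) {0..x0}" using ftc gper by simp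
  have s0sq: "s0 * s0 = 1" using M0[of 0] unfolding s0_def by (simp add: sgn_if)
  have final: "integral {0..x0} F1 = - s0 * integral {0..x0} F2"
  proof (cases "F2 integrable_on {0..x0}")
    case True
    then have "(F2 has_integral integral {0..x0} F2) {0..x0}" by (rule integrable_integral)
    from has_integral_add[OF g0 has_integral_mult_right[OF this, of "- s0"]]
    have "((\<lambda>x. G' x + (- s0) * F2 x) has_integral (- s0 * integral {0..x0} F2)) {0..x0}" by simp
    then have "(F1 has_integral (- s0 * integral {0..x0} F2)) {0..x0}"
      by (rule has_integral_eq[rotated]) (use pw in auto)
    then show ?thesis by (rule integral_unique)
  next
    case False
    have "\<not> F1 integrable_on {0..x0}"
    proof
      assume "F1 integrable_on {0..x0}"
      then have "(\<lambda>x. s0 * (G' x - F1 x)) integrable_on {0..x0}"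
        using g0 by (intro integrable_on_mult_right integrable_diff) auto
      then have "F2 integrable_on {0..x0}"
      proof (rule integrable_eq)
        fix x assume "x \<in> {0..x0}"
        then have "F1 x = G' x + (- s0) * F2 x" using pw by auto
        then have eqG: "G' x = F1 x + s0 * F2 x" by simp
        have "s0 * (G' x - F1 x) = (s0 * s0) * F2 x" unfolding eqG by (simp add: algebra_simps)
        then show "s0 * (G' x - F1 x) = F2 x" using s0sq by simp
      qed
      with False show False by simp
    qed
    then show ?thesis using False by (simp add: not_integrable_integral)
  qed
  have s0eq: "s0 = sgn (sff_M (strip t0) X (0, 0))" using hM[of 0] by (simp add: s0_def D_def)
  show ?thesis using final unfolding F1_def F2_def D_def s0eq .
qed


end
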